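(* There is an absolute constant $C$ such that the following holds. Let $m\geq2$ be a divisor of $n$ and let $X_{n/m}$ be the set of unordered partitions of $\{1,\dots,n\}$ into $n/m$ cells each of size $m$, with the natural action of $S_n$. If $\pi\in S_n$ has $c$ cycles, then the number of elements of $X_{n/m}$ fixed by $\pi$ is at most $m^{Cn}c^{(1-1/m)c}$. *)

theory Defs
  imports Complex_Main "HOL-Library.Disjoint_Sets" "HOL-Combinatorics.Permutations" "HOL-Combinatorics.Orbits"
begin

definition uniform_partitions :: "nat \<Rightarrow> nat \<Rightarrow> nat set set set" where
  "uniform_partitions n m =
     {P. partition_on {1..n} P \<and> (\<forall>B\<in>P. card B = m) \<and> card P = n div m}"

definition perm_act_partition :: "(nat \<Rightarrow> nat) \<Rightarrow> nat set set \<Rightarrow> nat set set" where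
  "perm_act_partition p P = (\<lambda>B. p ` B) ` P"

definition num_cycles :: "(nat \<Rightarrow> nat) \<Rightarrow> nat \<Rightarrow> nat" where
  "num_cycles p n = card ((\<lambda>x. orbit p x) ` {1..n})"

end

theory Submission
  imports Defs "HOL-Library.FuncSet"
begin

definition cellof :: "nat set set \<Rightarrow> nat \<Rightarrow> nat set" where
  "cellof P x = (THE B. B \<in> P \<and> x \<in> B)"

definition grp :: "(nat \<Rightarrow> nat) \<Rightarrow> nat set set \<Rightarrow> nat \<Rightarrow> nat set" where
  "grp p P x = \<Union> (orbit p ` cellof P x)"

definition encf :: "nat set \<Rightarrow> (nat \<Rightarrow> nat) \<Rightarrow> nat set set \<Rightarrow> nat set \<Rightarrow> nat set" where
  "encf S p P = restrict (\<lambda>Z. orbit p (Min (grp p P (Min Z)))) (orbit p ` S)"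

definition encw :: "nat set \<Rightarrow> (nat \<Rightarrow> nat) \<Rightarrow> nat set set \<Rightarrow> nat set" where
  "encw S p P = \<Union> ((\<lambda>x. cellof P (Min (grp p P x))) ` S)"

definition Fs :: "nat set set \<Rightarrow> nat \<Rightarrow> (nat set \<Rightarrow> nat set) set" where
  "Fs Os m = {f \<in> Os \<rightarrow>\<^sub>E Os. (\<forall>Z\<in>f ` Os. f Z = Z) \<and> card Os \<le> m * card (f ` Os)}"

locale fp =
  fixes S :: "nat set" and p :: "nat \<Rightarrow> nat" and P :: "nat set set" and m :: nat
  assumes fin: "finite S" and perm: "p permutes S" and part: "partition_on S P"
    and sz: "\<And>B. B \<in> P \<Longrightarrow> card B = m" and fx: "perm_act_partition p P = P"
begin

abbreviation "cell \<equiv> cellof P"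
abbreviation "g \<equiv> grp p P"

lemma permp: "permutation p" using perm fin permutation_permutes by blast

lemma cell_unique: assumes "B \<in> P" "x \<in> B" shows "cell x = B"
  unfolding cellof_def
proof (rule the_equality)
  show "B \<in> P \<and> x \<in> B" using assms by (rule conjI)
  have d: "disjoint P" using part by (rule partition_onD2)
  fix B' assume "B' \<in> P \<and> x \<in> B'"
  then show "B' = B" using disjointD[OF d, of B' B] assms by blast
qed

lemma cell_mem: assumes "x \<in> S" shows "cell x \<in> P" "x \<in> cell x"
proof -
  have "x \<in> \<Union>P" using partition_onD1[OF part] assms by simp
  then obtain B where "B \<in> P" "x \<in> B" by (rule UnionE)
  then show "cell x \<in> P" "x \<in> cell x" using cell_unique by auto
qed

lemma cell_sub: "x \<in> S \<Longrightarrow> cell x \<subseteq> S"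
proof -
  assume "x \<in> S"
  then have "cell x \<in> P" by (rule cell_mem)
  then show "cell x \<subseteq> S" using partition_onD1[OF part] by (simp add: Union_upper)
qed

lemma img_mem: assumes "B \<in> P" shows "p ` B \<in> P"
proof -
  have "p ` B \<in> (\<lambda>B. p ` B) ` P" using assms by (rule imageI)
  then show ?thesis using fx unfolding perm_act_partition_def by simp
qed

lemma inS: "x \<in> S \<Longrightarrow> p x \<in> S" by (simp add: permutes_in_image[OF perm])
lemma powS: "x \<in> S \<Longrightarrow> (p^^i) x \<in> S" by (induct i) (simp_all add: inS)

lemma cell_step: assumes x: "x \<in> S" shows "cell (p x) = p ` cell x"
proof -
  have "p ` cell x \<in> P" by (rule img_mem[OF cell_mem(1)[OF x]])
  moreover have "p x \<in> p ` cell x" using cell_mem(2)[OF x] by (rule imageI)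
  ultimately show ?thesis by (rule cell_unique)
qed

lemma cell_pow: assumes x: "x \<in> S" shows "cell ((p^^i) x) = (p^^i) ` cell x"
proof (induct i)
  case 0 then show ?case by simp
next
  case (Suc i)
  have "cell ((p^^Suc i) x) = cell (p ((p^^i) x))" by simp
  also have "\<dots> = p ` cell ((p^^i) x)" using powS[OF x] by (rule cell_step)
  also have "\<dots> = p ` (p^^i) ` cell x" using Suc by simp
  also have "\<dots> = (p^^Suc i) ` cell x" by (simp add: image_comp)
  finally show ?case .
qed

lemma orb_step: "orbit p (p u) = orbit p u" using permutation_orbit_step[OF permp] .
lemma orb_eq: "z \<in> orbit p w \<Longrightarrow> orbit p z = orbit p w"
  using orbit_cyclic_eq3[OF cyclic_on_orbit'[OF permp]] .
lemma orb_self: "w \<in> orbit p w" using permutation_self_in_orbit[OF permp] .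
lemma orb_sub: "w \<in> S \<Longrightarrow> orbit p w \<subseteq> S" using permutes_orbit_subset[OF perm] .
lemma orb_fin: "finite (orbit p w)" by (rule finite_orbit[OF orb_self])

lemma g_step: assumes x: "x \<in> S" shows "g (p x) = g x"
proof -
  have "orbit p ` p ` cell x = orbit p ` cell x" by (simp add: image_image orb_step)
  then show ?thesis unfolding grp_def cell_step[OF x] by simp
qed

lemma g_orb: assumes "y \<in> orbit p x" "x \<in> S" shows "g y = g x"
  using assms(1)
proof induct
  case base then show ?case by (rule g_step[OF assms(2)])
next
  case (step y)
  have "y \<in> S" using orb_sub[OF assms(2)] step(1) by (rule subsetD)
  then have "g (p y) = g y" by (rule g_step)
  then show ?case using step(2) by simp
qed

lemma g_cell: assumes x: "x \<in> S" and y: "y \<in> cell x" shows "g y = g x"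
proof -
  have "cell y = cell x" by (rule cell_unique[OF cell_mem(1)[OF x] y])
  then show ?thesis unfolding grp_def by simp
qed

lemma g_mem: assumes "x \<in> S" "y \<in> g x" shows "g y = g x"
proof -
  from assms(2) obtain w where w: "w \<in> cell x" "y \<in> orbit p w" unfolding grp_def by blast
  have "w \<in> S" using w(1) cell_sub assms(1) by blast
  then have "g y = g w" using g_orb w(2) by blast
  also have "\<dots> = g x" using g_cell assms(1) w(1) by blast
  finally show ?thesis .
qed

lemma g_self: "x \<in> S \<Longrightarrow> x \<in> g x" unfolding grp_def using cell_mem(2) orb_self by blast
lemma g_sub: "x \<in> S \<Longrightarrow> g x \<subseteq> S" unfolding grp_def using cell_sub orb_sub by blast
lemma g_fin: "x \<in> S \<Longrightarrow> finite (g x)" using g_sub fin finite_subset by blast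
lemma cell_g: "x \<in> S \<Longrightarrow> cell x \<subseteq> g x" unfolding grp_def using orb_self by blast
lemma g_char: assumes x: "x \<in> S" shows "g x = {z \<in> S. g z = g x}"
proof (rule set_eqI)
  fix z show "z \<in> g x \<longleftrightarrow> z \<in> {z \<in> S. g z = g x}"
  proof
    assume z: "z \<in> g x"
    have "z \<in> S" using g_sub[OF x] z by (rule subsetD)
    moreover have "g z = g x" by (rule g_mem[OF x z])
    ultimately show "z \<in> {z \<in> S. g z = g x}" by simp
  next
    assume "z \<in> {z \<in> S. g z = g x}"
    then have "z \<in> S" "g z = g x" by simp_all
    then show "z \<in> g x" using g_self[of z] by simp
  qed
qed

definition ld where "ld x = Min (g x)"
lemma ld_mem: assumes x: "x \<in> S" shows "ld x \<in> g x"
proof -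
  have "g x \<noteq> {}" using g_self[OF x] by blast
  then show ?thesis unfolding ld_def by (rule Min_in[OF g_fin[OF x]])
qed
lemma ld_S: assumes x: "x \<in> S" shows "ld x \<in> S" using g_sub[OF x] ld_mem[OF x] by (rule subsetD)
lemma g_ld: assumes x: "x \<in> S" shows "g (ld x) = g x" by (rule g_mem[OF x ld_mem[OF x]])

lemma encf_orb: assumes x: "x \<in> S" shows "encf S p P (orbit p x) = orbit p (ld x)"
proof -
  have "Min (orbit p x) \<in> orbit p x" by (rule Min_in[OF orb_fin orbit_nonempty])
  then have e: "g (Min (orbit p x)) = g x" by (rule g_orb[OF _ x])
  have mem: "orbit p x \<in> orbit p ` S" using x by (rule imageI)
  have "encf S p P (orbit p x) = orbit p (Min (g (Min (orbit p x))))"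
    unfolding encf_def using mem by (rule restrict_apply')
  also have "\<dots> = orbit p (ld x)" unfolding ld_def e ..
  finally show ?thesis .
qed

lemma ld_iff: assumes x: "x \<in> S" and y: "y \<in> S"
  shows "orbit p (ld x) = orbit p (ld y) \<longleftrightarrow> g x = g y"
proof
  assume e: "orbit p (ld x) = orbit p (ld y)"
  have "ld y \<in> orbit p (ld y)" by (rule orb_self)
  then have "ld y \<in> orbit p (ld x)" unfolding e .
  then have "g (ld y) = g (ld x)" by (rule g_orb[OF _ ld_S[OF x]])
  then show "g x = g y" unfolding g_ld[OF x] g_ld[OF y] by (rule sym)
next
  assume "g x = g y" then show "orbit p (ld x) = orbit p (ld y)" unfolding ld_def by simp
qed

lemma W_int: assumes x: "x \<in> S" shows "encw S p P \<inter> g x = cell (ld x)"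
proof
  show "encw S p P \<inter> g x \<subseteq> cell (ld x)"
  proof
    fix z assume z: "z \<in> encw S p P \<inter> g x"
    then have "z \<in> (\<Union>y\<in>S. cell (ld y))" unfolding encw_def ld_def by simp
    then obtain y where y: "y \<in> S" "z \<in> cell (ld y)" by (rule UN_E)
    have z3: "z \<in> g x" using z by simp
    have "z \<in> g (ld y)" using cell_g[OF ld_S[OF y(1)]] y(2) by (rule subsetD)
    then have "g z = g (ld y)" by (rule g_mem[OF ld_S[OF y(1)]])
    then have a: "g z = g y" unfolding g_ld[OF y(1)] .
    have b: "g z = g x" by (rule g_mem[OF x z3])
    have "g y = g x" using a b by simp
    then have "ld y = ld x" unfolding ld_def by simp
    then show "z \<in> cell (ld x)" using y(2) by simp
  qed
next
  show "cell (ld x) \<subseteq> encw S p P \<inter> g x"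
  proof
    fix z assume z: "z \<in> cell (ld x)"
    have "z \<in> (\<Union>y\<in>S. cell (ld y))" using x z by (rule UN_I)
    then have "z \<in> encw S p P" unfolding encw_def ld_def by simp
    moreover have "z \<in> g (ld x)" using cell_g[OF ld_S[OF x]] z by (rule subsetD)
    ultimately show "z \<in> encw S p P \<inter> g x" unfolding g_ld[OF x] by simp
  qed
qed

lemma P_eq: "P = cell ` S"
proof
  show "cell ` S \<subseteq> P" using cell_mem by blast
  show "P \<subseteq> cell ` S"
  proof
    fix B assume B: "B \<in> P"
    then obtain x where x: "x \<in> B" using part partition_onD3 by fastforce
    then have "x \<in> S" "cell x = B" using B part partition_onD1 cell_unique by blast+
    then show "B \<in> cell ` S" by blast
  qed
qed

lemma fiber: assumes x: "x \<in> S"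
  shows "card {Z \<in> orbit p ` S. encf S p P Z = orbit p (ld x)} \<le> m"
proof -
  have "{Z \<in> orbit p ` S. encf S p P Z = orbit p (ld x)} \<subseteq> orbit p ` cell x"
  proof
    fix Z assume "Z \<in> {Z \<in> orbit p ` S. encf S p P Z = orbit p (ld x)}"
    then obtain z where z: "z \<in> S" "Z = orbit p z" "orbit p (ld z) = orbit p (ld x)"
      using encf_orb by auto
    then have "g z = g x" using ld_iff x by blast
    then have "z \<in> g x" using g_self z by metis
    then obtain w where "w \<in> cell x" "z \<in> orbit p w" unfolding grp_def by blast
    then show "Z \<in> orbit p ` cell x" using z orb_eq by blast
  qed
  moreover have fc: "finite (cell x)" using cell_sub x fin finite_subset by blast
  ultimately have "card {Z \<in> orbit p ` S. encf S p P Z = orbit p (ld x)} \<le> card (orbit p ` cell x)"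
    by (intro card_mono) auto
  also have "\<dots> \<le> card (cell x)" using fc by (rule card_image_le)
  also have "\<dots> = m" using sz cell_mem x by blast
  finally show ?thesis .
qed

lemma encf_in: "encf S p P \<in> Fs (orbit p ` S) m"
proof -
  let ?O = "orbit p ` S"
  let ?f = "encf S p P"
  have pie: "?f \<in> ?O \<rightarrow>\<^sub>E ?O"
    unfolding encf_def
  proof (rule restrict_PiE_iff[THEN iffD2], rule ballI)
    fix Z assume "Z \<in> ?O"
    then obtain x where x: "x \<in> S" "Z = orbit p x" by (rule imageE)
    have "Min Z \<in> Z" unfolding x(2) by (rule Min_in[OF orb_fin orbit_nonempty])
    then have "Min Z \<in> S" using orb_sub[OF x(1)] x(2) by blast
    then have "ld (Min Z) \<in> S" by (rule ld_S)
    then have "orbit p (ld (Min Z)) \<in> ?O" by (rule imageI)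
    then show "orbit p (Min (g (Min Z))) \<in> ?O" unfolding ld_def .
  qed
  have idem: "\<forall>Z\<in>?f ` ?O. ?f Z = Z"
  proof
    fix Z assume "Z \<in> ?f ` ?O"
    then obtain Z0 where Z0: "Z0 \<in> ?O" "Z = ?f Z0" by (rule imageE)
    from Z0(1) obtain x where x: "x \<in> S" "Z0 = orbit p x" by (rule imageE)
    have Zx: "Z = orbit p (ld x)" using Z0(2) x(2) encf_orb[OF x(1)] by simp
    have "ld (ld x) = ld x" using g_ld[OF x(1)] unfolding ld_def by simp
    then show "?f Z = Z" unfolding Zx encf_orb[OF ld_S[OF x(1)]] by simp
  qed
  have fo: "finite ?O" using fin by (rule finite_imageI)
  have eq: "?O = (\<Union>Y\<in>?f ` ?O. {Z \<in> ?O. ?f Z = Y})" by blast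
  have "card ?O = card (\<Union>Y\<in>?f ` ?O. {Z \<in> ?O. ?f Z = Y})" by (rule arg_cong[OF eq])
  also have "\<dots> \<le> (\<Sum>Y\<in>?f ` ?O. card {Z \<in> ?O. ?f Z = Y})"
    by (rule card_UN_le) (rule finite_imageI[OF fo])
  also have "\<dots> \<le> card (?f ` ?O) * m"
  proof -
    have fb: "card {Z \<in> ?O. ?f Z = Y} \<le> m" if Y: "Y \<in> ?f ` ?O" for Y
    proof -
      from Y obtain Z where Z: "Z \<in> ?O" "Y = ?f Z" by (rule imageE)
      from Z(1) obtain x where x1: "x \<in> S" "Z = orbit p x" by (rule imageE)
      have x: "Y = orbit p (ld x)" using x1 Z(2) encf_orb[OF x1(1)] by simp
      show ?thesis unfolding x by (rule fiber[OF x1(1)])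
    qed
    have "(\<Sum>Y\<in>?f ` ?O. card {Z \<in> ?O. ?f Z = Y}) \<le> of_nat (card (?f ` ?O)) * m"
      by (rule sum_bounded_above) (rule fb)
    then show ?thesis by simp
  qed
  finally have cd: "card ?O \<le> m * card (?f ` ?O)" by (simp add: mult.commute)
  show ?thesis unfolding Fs_def using pie idem cd by (intro CollectI conjI)
qed
end

lemma enc_inj:
  assumes "fp S p P1 m" "fp S p P2 m" "encf S p P1 = encf S p P2" "encw S p P1 = encw S p P2"
  shows "P1 = P2"
proof -
  interpret A: fp S p P1 m by fact
  interpret B: fp S p P2 m by fact
  have ld: "orbit p (A.ld x) = orbit p (B.ld x)" if "x \<in> S" for x
    using A.encf_orb B.encf_orb assms(3) that by metis
  have gg: "grp p P1 x = grp p P2 x" if x: "x \<in> S" for x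
  proof -
    have "grp p P1 x = {z \<in> S. grp p P1 z = grp p P1 x}" using A.g_char x by blast
    also have "\<dots> = {z \<in> S. orbit p (A.ld z) = orbit p (A.ld x)}" using A.ld_iff x by blast
    also have "\<dots> = {z \<in> S. orbit p (B.ld z) = orbit p (B.ld x)}" using ld x by auto
    also have "\<dots> = {z \<in> S. grp p P2 z = grp p P2 x}" using B.ld_iff x by blast
    also have "\<dots> = grp p P2 x" using B.g_char x by blast
    finally show ?thesis .
  qed
  have cc: "cellof P1 x = cellof P2 x" if x: "x \<in> S" for x
  proof -
    have l: "A.ld x = B.ld x" unfolding A.ld_def B.ld_def using gg x by simp
    have c: "cellof P1 (A.ld x) = cellof P2 (A.ld x)"
      using A.W_int[OF x] B.W_int[OF x] gg[OF x] assms(4) l by metis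
    have "x \<in> grp p P1 (A.ld x)" using A.g_ld A.g_self x by metis
    then obtain w where w: "w \<in> cellof P1 (A.ld x)" "x \<in> orbit p w" unfolding grp_def by blast
    then obtain i where i: "x = (p^^i) w" by (auto simp: orbit_altdef)
    have wS: "w \<in> S" using w(1) A.cell_sub A.ld_S x by blast
    have "cellof P1 x = (p^^i) ` cellof P1 w" using A.cell_pow wS i by simp
    also have "cellof P1 w = cellof P1 (A.ld x)" using A.cell_unique A.cell_mem A.ld_S x w(1) by metis
    also have "\<dots> = cellof P2 w" using c w(1) B.cell_unique B.cell_mem A.ld_S x by metis
    also have "(p^^i) ` cellof P2 w = cellof P2 x" using B.cell_pow wS i by simp
    finally show ?thesis .
  qed
  show ?thesis using A.P_eq B.P_eq cc by (metis image_cong)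
qed


lemma card_Fs:
  assumes fo: "finite Os"
  shows "card (Fs Os m) \<le> (\<Sum>T\<in>{T. T \<subseteq> Os \<and> card Os \<le> m * card T}. card T ^ card (Os - T))"
proof -
  let ?I = "{T. T \<subseteq> Os \<and> card Os \<le> m * card T}"
  let ?G = "\<lambda>T. {f \<in> Os \<rightarrow>\<^sub>E Os. f ` Os = T \<and> (\<forall>Z\<in>T. f Z = Z)}"
  have sub: "Fs Os m \<subseteq> (\<Union>T\<in>?I. ?G T)" unfolding Fs_def by (auto simp: PiE_iff)
  have cG: "card (?G T) \<le> card T ^ card (Os - T)" if T: "T \<subseteq> Os" for T
  proof -
    have "inj_on (\<lambda>f. restrict f (Os - T)) (?G T)"
    proof (rule inj_onI)
      fix f h assume f: "f \<in> ?G T" and h: "h \<in> ?G T"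
        and e: "restrict f (Os - T) = restrict h (Os - T)"
      show "f = h"
      proof
        fix Z show "f Z = h Z"
        proof (cases "Z \<in> Os")
          case False then show ?thesis using f h by (auto simp: PiE_iff extensional_def)
        next
          case True then show ?thesis
          proof (cases "Z \<in> T")
            case True then show ?thesis using f h by auto
          next
            case False then show ?thesis using e \<open>Z \<in> Os\<close> by (metis Diff_iff restrict_apply')
          qed
        qed
      qed
    qed
    moreover have "(\<lambda>f. restrict f (Os - T)) ` ?G T \<subseteq> (Os - T) \<rightarrow>\<^sub>E T" by auto
    moreover have "finite ((Os - T) \<rightarrow>\<^sub>E T)" using fo T finite_subset by (intro finite_PiE) auto
    ultimately have "card (?G T) \<le> card ((Os - T) \<rightarrow>\<^sub>E T)" by (meson card_inj_on_le)
    also have "\<dots> = card T ^ card (Os - T)" using fo by (simp add: card_PiE)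
    finally show ?thesis .
  qed
  have "?I \<subseteq> Pow Os" by blast
  then have fI: "finite ?I" using fo by (simp add: finite_subset)
  have "finite (Os \<rightarrow>\<^sub>E Os)" using fo by (intro finite_PiE) auto
  then have "finite (\<Union>T\<in>?I. ?G T)" by (rule finite_subset[rotated]) auto
  then have "card (Fs Os m) \<le> card (\<Union>T\<in>?I. ?G T)" using sub by (rule card_mono)
  also have "\<dots> \<le> (\<Sum>T\<in>?I. card (?G T))" using fI by (rule card_UN_le)
  also have "\<dots> \<le> (\<Sum>T\<in>?I. card T ^ card (Os - T))" by (rule sum_mono) (use cG in auto)
  finally show ?thesis .
qed

lemma term_bound:
  assumes fo: "finite Os" and T: "T \<subseteq> Os" and c: "card Os \<le> m * card T" and m: "m \<ge> 1"
    and c1: "card Os \<ge> 1"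
  shows "real (card T ^ card (Os - T)) \<le> real (card Os) powr ((1 - 1 / real m) * real (card Os))"
proof -
  let ?c = "card Os" let ?t = "card T"
  have tc: "?t \<le> ?c" using fo T card_mono by blast
  have d: "card (Os - T) = ?c - ?t" using card_Diff_subset T fo finite_subset by metis
  have "real (?t ^ (?c - ?t)) = real ?t ^ (?c - ?t)" by simp
  also have "\<dots> \<le> real ?c ^ (?c - ?t)" using tc by (intro power_mono) auto
  also have "\<dots> = real ?c powr real (?c - ?t)" using c1 by (simp add: powr_realpow)
  also have "\<dots> \<le> real ?c powr ((1 - 1 / real m) * real ?c)"
  proof (rule powr_mono)
    have "real ?c \<le> real m * real ?t" using c by (metis of_nat_le_iff of_nat_mult)
    then have "real ?c / real m \<le> real ?t" using m by (simp add: divide_le_eq mult.commute)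
    then show "real (?c - ?t) \<le> (1 - 1 / real m) * real ?c"
      using tc by (simp add: of_nat_diff algebra_simps)
  qed (use c1 in auto)
  finally show ?thesis using d by simp
qed

theorem lemma4p4:
  shows "\<exists>C::real. \<forall>n m :: nat. \<forall>p.
     n \<ge> 1 \<longrightarrow> m \<ge> 2 \<longrightarrow> m dvd n \<longrightarrow> p permutes {1..n} \<longrightarrow>
     real (card {P \<in> uniform_partitions n m. perm_act_partition p P = P})
       \<le> real m powr (C * real n) *
         real (num_cycles p n) powr ((1 - 1 / real m) * real (num_cycles p n))"
proof (intro exI[of _ 2] allI impI)
  fix n m :: nat and p
  assume n: "n \<ge> 1" and m: "m \<ge> 2" and "m dvd n" and perm: "p permutes {1..n}"
  let ?S = "{1..n}"
  let ?Os = "orbit p ` ?S"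
  let ?X = "{P \<in> uniform_partitions n m. perm_act_partition p P = P}"
  let ?c = "card ?Os"
  let ?K = "real ?c powr ((1 - 1 / real m) * real ?c)"
  let ?I = "{T. T \<subseteq> ?Os \<and> card ?Os \<le> m * card T}"
  have fpP: "fp ?S p P m" if PX: "P \<in> ?X" for P
  proof -
    from PX have h: "partition_on ?S P" "\<forall>B\<in>P. card B = m" "perm_act_partition p P = P"
      unfolding uniform_partitions_def by simp_all
    show ?thesis
    proof
      show "finite ?S" by simp
      show "p permutes ?S" by (rule perm)
      show "partition_on ?S P" by (rule h(1))
      show "card B = m" if "B \<in> P" for B using h(2) that by simp
      show "perm_act_partition p P = P" by (rule h(3))
    qed
  qed
  have fo: "finite ?Os" by simp
  have inj: "inj_on (\<lambda>P. (encf ?S p P, encw ?S p P)) ?X"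
  proof (rule inj_onI)
    fix P1 P2 assume "P1 \<in> ?X" "P2 \<in> ?X"
      and e: "(encf ?S p P1, encw ?S p P1) = (encf ?S p P2, encw ?S p P2)"
    then have "fp ?S p P1 m" "fp ?S p P2 m" using fpP by simp_all
    moreover have "encf ?S p P1 = encf ?S p P2" "encw ?S p P1 = encw ?S p P2" using e by simp_all
    ultimately show "P1 = P2" by (rule enc_inj)
  qed
  have img: "(\<lambda>P. (encf ?S p P, encw ?S p P)) ` ?X \<subseteq> Fs ?Os m \<times> Pow ?S"
  proof
    fix Q assume "Q \<in> (\<lambda>P. (encf ?S p P, encw ?S p P)) ` ?X"
    then obtain P where P: "P \<in> ?X" "Q = (encf ?S p P, encw ?S p P)" by (rule imageE)
    interpret fp ?S p P m by (rule fpP[OF P(1)])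
    have "encw ?S p P \<subseteq> ?S"
    proof
      fix z assume "z \<in> encw ?S p P"
      then have "z \<in> (\<Union>y\<in>?S. cell (ld y))" unfolding encw_def ld_def by simp
      then obtain y where y: "y \<in> ?S" "z \<in> cell (ld y)" by (rule UN_E)
      show "z \<in> ?S" using cell_sub[OF ld_S[OF y(1)]] y(2) by (rule subsetD)
    qed
    then show "Q \<in> Fs ?Os m \<times> Pow ?S" unfolding P(2) using encf_in by simp
  qed
  have "Fs ?Os m \<subseteq> ?Os \<rightarrow>\<^sub>E ?Os" unfolding Fs_def by (rule Collect_restrict)
  moreover have "finite (?Os \<rightarrow>\<^sub>E ?Os)" by (rule finite_PiE[OF fo fo])
  ultimately have fF: "finite (Fs ?Os m)" by (rule finite_subset)
  have fP: "finite (Fs ?Os m \<times> Pow ?S)" using fF by simp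
  have "card ?X \<le> card (Fs ?Os m \<times> Pow ?S)" by (rule card_inj_on_le[OF inj img fP])
  also have "\<dots> = card (Fs ?Os m) * 2 ^ n" by (simp add: card_cartesian_product card_Pow)
  finally have N: "card ?X \<le> card (Fs ?Os m) * 2 ^ n" .
  have h1: "real (card ?X) \<le> real (card (Fs ?Os m)) * 2 ^ n"
  proof -
    have "real (card ?X) \<le> real (card (Fs ?Os m) * 2 ^ n)" using N by (simp only: of_nat_le_iff)
    also have "\<dots> = real (card (Fs ?Os m)) * 2 ^ n" by simp
    finally show ?thesis .
  qed
  have "real (card (Fs ?Os m)) \<le> real (\<Sum>T\<in>?I. card T ^ card (?Os - T))"
    using card_Fs[OF fo, of m] by (simp only: of_nat_le_iff)
  also have "\<dots> = (\<Sum>T\<in>?I. real (card T ^ card (?Os - T)))" by (rule of_nat_sum)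
  also have "\<dots> \<le> (\<Sum>T\<in>?I. ?K)"
  proof (rule sum_mono)
    fix T assume "T \<in> ?I"
    then have T: "T \<subseteq> ?Os" "card ?Os \<le> m * card T" by simp_all
    have "orbit p 1 \<in> ?Os" using n by simp
    then have "?Os \<noteq> {}" by blast
    then have "card ?Os > 0" using fo by (simp add: card_gt_0_iff)
    then have c1: "card ?Os \<ge> 1" by simp
    have m1: "m \<ge> 1" using m by simp
    show "real (card T ^ card (?Os - T)) \<le> ?K" by (rule term_bound[OF fo T m1 c1])
  qed
  also have "\<dots> = real (card ?I) * ?K" by simp
  also have "\<dots> \<le> 2 ^ n * ?K"
  proof (rule mult_right_mono)
    have "?I \<subseteq> Pow ?Os" by blast
    then have "card ?I \<le> card (Pow ?Os)" using fo by (intro card_mono) simp_all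
    also have "\<dots> = 2 ^ ?c" using fo by (rule card_Pow)
    also have "\<dots> \<le> 2 ^ n"
    proof -
      have "?c \<le> card ?S" by (rule card_image_le) simp
      then have "?c \<le> n" by simp
      then show ?thesis by (rule power_increasing) simp
    qed
    finally have "card ?I \<le> 2 ^ n" .
    then have "real (card ?I) \<le> real (2 ^ n)" by (simp only: of_nat_le_iff)
    then show "real (card ?I) \<le> 2 ^ n" by simp
  qed simp
  finally have h2: "real (card (Fs ?Os m)) \<le> 2 ^ n * ?K" .
  have "real (card (Fs ?Os m)) * 2 ^ n \<le> 2 ^ n * ?K * 2 ^ n"
    using h2 by (rule mult_right_mono) simp
  with h1 have "real (card ?X) \<le> 2 ^ n * ?K * 2 ^ n" by (rule order_trans)
  also have "\<dots> = 2 powr (2 * real n) * ?K"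
  proof -
    have e: "(2::real) powr (2 * real n) = 2 ^ (2 * n)" using powr_realpow[of 2 "2 * n"] by simp
    have "(2::real) ^ (2 * n) = 2 ^ n * 2 ^ n" by (simp add: mult_2 power_add)
    then show ?thesis unfolding e by (simp only: mult_ac)
  qed
  also have "\<dots> \<le> real m powr (2 * real n) * ?K"
  proof (rule mult_right_mono)
    show "2 powr (2 * real n) \<le> real m powr (2 * real n)"
      by (rule powr_mono2) (use m in simp_all)
  qed simp
  finally show "real (card ?X) \<le> real m powr (2 * real n) *
         real (num_cycles p n) powr ((1 - 1 / real m) * real (num_cycles p n))"
    unfolding num_cycles_def .
qed

end
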